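(* In the setting of problem (P) under the standing assumptions, run Algorithm LCPG with $\lim_k\eta^k=\eta$, and suppose every feasible point of (P) satisfies MFCQ, so that there is a constant $B>0$ with $\|\lambda^{k+1}\|\le B$ for all $k$. Let $D:=\sqrt{(\psi_0(x^0)-\psi_0^* )/L_0}$ and let $\alpha_0,\dots,\alpha_K>0$ be nondecreasing. Then $$\sum_{k=0}^K\alpha_k\|\partial_x\mathcal{L}(x^{k+1},\lambda^{k+1})\|_-^2\le8(L_0+B\|L\|)^2D^2\alpha_K,$$ $$\sum_{k=0}^K\alpha_k\langle\lambda^{k+1},|\psi(x^{k+1})-\eta|\rangle\le2B\|L\|D^2\alpha_K+B\sum_{k=0}^K\alpha_k\|\eta-\eta^k\|,$$ where $|\cdot|$ is taken componentwise. Consequently, if $\hat k\in\{0,\dots,K\}$ is drawn with $\Pr(\hat k=k)=\alpha_k/\sum_{j=0}^K\alpha_j$, then $x^{\hat k+1}$ is a randomized $\epsilon_K$ type-I KKT point of (P) (with multiplier $\lambda^{\hat k+1}$) for $$\epsilon_K=\frac{1}{\sum_{k=0}^K\alpha_k}\max\Big\{8(L_0+B\|L\|)^2D^2\alpha_K,\ 2B\|L\|D^2\alpha_K+B\sum_{k=0}^K\alpha_k\|\eta-\eta^k\|\Big\}.$$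
   Context: Problem (P): minimize $\psi_0(x):=f_0(x)+\chi_0(x)$ over $x\in\mathbb{R}^d$ subject to $\psi_i(x):=f_i(x)+\chi_i(x)\le\eta_i$, $i\in[m]:=\{1,\dots,m\}$. Standing assumptions: $\chi_0$ is proper, convex, lower semicontinuous; each $\chi_i$ ($i\in[m]$) is convex and continuous on $\mathrm{dom}\,\chi_0$; each $f_i$ ($i=0,\dots,m$) is differentiable with $L_i$-Lipschitz gradient on $\mathrm{dom}\,\chi_0$; $L:=(L_1,\dots,L_m)^\top$; the optimal value $\psi_0^*$ of (P) is finite; the feasible set $\mathcal{X}:=\{x\in\mathrm{dom}\,\chi_0:\psi_i(x)\le\eta_i,\ i\in[m]\}$ is nonempty and compact. Write $\psi=(\psi_1,\dots,\psi_m)^\top$, $\eta=(\eta_1,\dots,\eta_m)^\top$; vector inequalities are componentwise. Subdifferential: $\partial\psi_i(x):=\nabla f_i(x)+\partial\chi_i(x)$ (convex subdifferential of $\chi_i$, Minkowski sum). Lagrangian $\mathcal{L}(x,\lambda)=\psi_0(x)+\sum_{i=1}^m\lambda_i(\psi_i(x)-\eta_i)$ and $\partial_x\mathcal{L}(x,\lambda):=\partial\psi_0(x)+\sum_i\lambda_i\partial\psi_i(x)$. For a set $S$, $\|S\|_-:=\inf\{\|s\|:s\in S\}$. Algorithm LCPG: given $x^0\in\mathrm{dom}\,\chi_0$ and $\eta^0\in\mathbb{R}^m$ with $\psi(x^0)<\eta^0<\eta$. For $k=0,1,\dots$: define for $i=0,\dots,m$ the function $\psi_i^k(x):=f_i(x^k)+\langle\nabla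 f_i(x^k),x-x^k\rangle+\frac{L_i}{2}\|x-x^k\|^2+\chi_i(x)$; let $x^{k+1}$ be the minimizer of $\psi_0^k(x)$ subject to $\psi_i^k(x)\le\eta_i^k$, $i\in[m]$ (the $k$-th subproblem); set $\eta^{k+1}=\eta^k+\delta^k$ with $\delta^k\in\mathbb{R}^m$, $\delta^k>0$, chosen so that $\eta^{k+1}<\eta$. A vector $\lambda^{k+1}\in\mathbb{R}^m_+$ is a Lagrange multiplier of the $k$-th subproblem if $0\in\partial\psi_0^k(x^{k+1})+\sum_i\lambda_i^{k+1}\partial\psi_i^k(x^{k+1})$ and $\lambda_i^{k+1}(\psi_i^k(x^{k+1})-\eta_i^k)=0$ for all $i\in[m]$, where $\partial\psi_i^k(x)=\nabla f_i(x^k)+L_i(x-x^k)+\partial\chi_i(x)$. MFCQ: a point $x$ satisfies MFCQ if there is $z\in\mathbb{R}^d$ with $\langle z,v\rangle\le0$ for all $v$ in the normal cone $N_{\mathrm{dom}\,\chi_0}(x)$ and $\max_{v\in\partial\psi_i(x)}\langle v,z\rangle<0$ for every $i\in\mathcal{A}(x):=\{i\in[m]:\psi_i(x)=\eta_i\}$. Type-I KKT: $x$ is an $\epsilon$ type-I KKT point of (P) if $\psi(x)\le\eta$ and there is $\lambda\in\mathbb{R}^m_+$ with $\|\partial_x\mathcal{L}(x,\lambda)\|_-^2\le\epsilon$ and $-\sum_i\lambda_i(\psi_i(x)-\eta_i)\le\epsilon$. It is a randomized $\epsilon$ type-I KKT point if $x,\lambda$ are random, feasible, and these two inequalities hold in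 expectation. *)

theory Defs
  imports "HOL-Analysis.Analysis" "HOL-Probability.Probability"
begin

text \<open>Convex subdifferential of h at x, relative to the domain C = dom chi_0
  (i.e. the subdifferential of h restricted to C, extended by +infinity outside C).\<close>
definition csubdiff :: "'a::real_inner set \<Rightarrow> ('a \<Rightarrow> real) \<Rightarrow> 'a \<Rightarrow> 'a set" where
  "csubdiff C h x = {v. \<forall>y\<in>C. h x + inner v (y - x) \<le> h y}"

definition ncone :: "'a::real_inner set \<Rightarrow> 'a \<Rightarrow> 'a set" where
  "ncone C x = {v. \<forall>y\<in>C. inner v (y - x) \<le> 0}"

definition setnorm :: "'a::real_normed_vector set \<Rightarrow> real" where
  "setnorm S = Inf (norm ` S)"

text \<open>Euclidean norm of a vector in R^m, represented by its components 1..m.\<close>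
definition vnorm :: "nat \<Rightarrow> (nat \<Rightarrow> real) \<Rightarrow> real" where
  "vnorm m v = sqrt (\<Sum>i=1..m. (v i)^2)"

text \<open>With G i = grad f_i this is the partial x-subdifferential of the Lagrangian;
  with G i y = grad f_i(x^k) + L_i (y - x^k) it is that of the k-th subproblem.\<close>
definition lagr_subdiff ::
  "'a::real_inner set \<Rightarrow> nat \<Rightarrow> (nat \<Rightarrow> 'a \<Rightarrow> 'a) \<Rightarrow> (nat \<Rightarrow> 'a \<Rightarrow> real)
    \<Rightarrow> (nat \<Rightarrow> real) \<Rightarrow> 'a \<Rightarrow> 'a set" where
  "lagr_subdiff C m G chi lam x =
     {G 0 x + g 0 + (\<Sum>i=1..m. lam i *\<^sub>R (G i x + g i)) | g.
        \<forall>i\<in>{0..m}. g i \<in> csubdiff C (chi i) x}"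

definition psi :: "(nat \<Rightarrow> 'a \<Rightarrow> real) \<Rightarrow> (nat \<Rightarrow> 'a \<Rightarrow> real) \<Rightarrow> nat \<Rightarrow> 'a \<Rightarrow> real" where
  "psi f chi i x = f i x + chi i x"

definition psik :: "(nat \<Rightarrow> 'a \<Rightarrow> real) \<Rightarrow> (nat \<Rightarrow> 'a \<Rightarrow> 'a) \<Rightarrow> (nat \<Rightarrow> real)
    \<Rightarrow> (nat \<Rightarrow> 'a \<Rightarrow> real) \<Rightarrow> 'a::real_inner \<Rightarrow> nat \<Rightarrow> 'a \<Rightarrow> real" where
  "psik f grad L chi xk i x =
     f i xk + inner (grad i xk) (x - xk) + L i / 2 * (norm (x - xk))^2 + chi i x"

definition feas :: "'a set \<Rightarrow> nat \<Rightarrow> (nat \<Rightarrow> 'a \<Rightarrow> real) \<Rightarrow> (nat \<Rightarrow> 'a \<Rightarrow> real)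
    \<Rightarrow> (nat \<Rightarrow> real) \<Rightarrow> 'a set" where
  "feas C m f chi eta = {x\<in>C. \<forall>i\<in>{1..m}. psi f chi i x \<le> eta i}"

text \<open>MFCQ at x.  "max over v in dpsi_i(x) of <v,z> < 0" is written as: the values
  <v,z> are bounded above by some negative constant.\<close>
definition MFCQ :: "'a::real_inner set \<Rightarrow> nat \<Rightarrow> (nat \<Rightarrow> 'a \<Rightarrow> real) \<Rightarrow> (nat \<Rightarrow> 'a \<Rightarrow> 'a)
    \<Rightarrow> (nat \<Rightarrow> 'a \<Rightarrow> real) \<Rightarrow> (nat \<Rightarrow> real) \<Rightarrow> 'a \<Rightarrow> bool" where
  "MFCQ C m f grad chi eta x \<longleftrightarrow>
     (\<exists>z. (\<forall>v\<in>ncone C x. inner z v \<le> 0) \<and>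
          (\<forall>i\<in>{1..m}. psi f chi i x = eta i \<longrightarrow>
             (\<exists>c<0. \<forall>v\<in>{grad i x + g | g. g \<in> csubdiff C (chi i) x}. inner v z \<le> c)))"

text \<open>Randomized epsilon type-I KKT point: p is the joint distribution of (x, lambda).\<close>
definition rand_typeI_KKT :: "'a::real_inner set \<Rightarrow> nat \<Rightarrow> (nat \<Rightarrow> 'a \<Rightarrow> real) \<Rightarrow> (nat \<Rightarrow> 'a \<Rightarrow> 'a)
    \<Rightarrow> (nat \<Rightarrow> 'a \<Rightarrow> real) \<Rightarrow> (nat \<Rightarrow> real) \<Rightarrow> ('a \<times> (nat \<Rightarrow> real)) pmf \<Rightarrow> real \<Rightarrow> bool" where
  "rand_typeI_KKT C m f grad chi eta p eps \<longleftrightarrow>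
     (\<forall>(y, l)\<in>set_pmf p. y \<in> feas C m f chi eta \<and> (\<forall>i\<in>{1..m}. 0 \<le> l i)) \<and>
     measure_pmf.expectation p (\<lambda>(y, l). (setnorm (lagr_subdiff C m grad chi l y))^2) \<le> eps \<and>
     measure_pmf.expectation p (\<lambda>(y, l). - (\<Sum>i=1..m. l i * (psi f chi i y - eta i))) \<le> eps"

end

theory Submission imports Defs begin

lemma descent_aux:
  fixes f :: "'a::real_inner \<Rightarrow> real" and s :: real
  assumes C: "convex C" and xC: "x \<in> C" and yC: "y \<in> C"
    and der: "\<forall>z\<in>C. GDERIV f z :> g z"
    and lip: "\<forall>u\<in>C. \<forall>w\<in>C. norm (g u - g w) \<le> L * norm (u - w)"
    and s: "s = 1 \<or> s = -1"
  shows "s * (f y - f x - inner (g x) (y - x)) \<le> L / 2 * (norm (y - x))\<^sup>2"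
proof -
  define v where "v = y - x"
  define \<phi> where "\<phi> t = s * (f (x + t *\<^sub>R v) - t * inner (g x) v) - L / 2 * t\<^sup>2 * (norm v)\<^sup>2" for t
  define \<phi>' where "\<phi>' t = s * (inner v (g (x + t *\<^sub>R v)) - inner (g x) v) - L * t * (norm v)\<^sup>2" for t
  have inC: "x + t *\<^sub>R v \<in> C" if "0 \<le> t" "t \<le> 1" for t
  proof -
    have "x + t *\<^sub>R v = (1 - t) *\<^sub>R x + t *\<^sub>R y" by (simp add: v_def algebra_simps)
    thus ?thesis using convexD_alt[OF C xC yC] that by simp
  qed
  have D: "DERIV \<phi> t :> \<phi>' t" if "0 \<le> t" "t \<le> 1" for t
  proof -
    have fd: "(f has_derivative (\<lambda>h. inner h (g (x + t *\<^sub>R v)))) (at (x + t *\<^sub>R v))"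
      using der inC[OF that] unfolding gderiv_def by blast
    have ld: "((\<lambda>t. x + t *\<^sub>R v) has_derivative (\<lambda>h. h *\<^sub>R v)) (at t)"
      by (auto intro!: derivative_eq_intros)
    have "((\<lambda>t. f (x + t *\<^sub>R v)) has_derivative (\<lambda>h. inner (h *\<^sub>R v) (g (x + t *\<^sub>R v)))) (at t)"
      using has_derivative_compose[OF ld fd] by (simp add: o_def)
    hence "((\<lambda>t. f (x + t *\<^sub>R v)) has_real_derivative inner v (g (x + t *\<^sub>R v))) (at t)"
      by (simp add: has_field_derivative_def mult_commute_abs)
    then show ?thesis unfolding \<phi>_def \<phi>'_def
      by (auto intro!: derivative_eq_intros simp: algebra_simps power2_eq_square)
  qed
  have "\<phi> 1 \<le> \<phi> 0"
  proof -
    obtain z where z: "0 < z" "z < 1" "\<phi> 1 - \<phi> 0 = (1 - 0) * \<phi>' z"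
      using MVT2[of 0 1 \<phi> \<phi>'] D by auto
    have "s * inner v (g (x + z *\<^sub>R v) - g x) \<le> \<bar>inner v (g (x + z *\<^sub>R v) - g x)\<bar>"
      using s by auto
    also have "\<dots> \<le> norm v * norm (g (x + z *\<^sub>R v) - g x)"
      by (rule Cauchy_Schwarz_ineq2)
    also have "\<dots> \<le> norm v * (L * norm (z *\<^sub>R v))"
    proof (rule mult_left_mono)
      have "norm (g (x + z *\<^sub>R v) - g x) \<le> L * norm ((x + z *\<^sub>R v) - x)"
        using lip[rule_format, OF inC[of z] xC] z by simp
      thus "norm (g (x + z *\<^sub>R v) - g x) \<le> L * norm (z *\<^sub>R v)" by simp
    qed simp
    also have "\<dots> = L * z * (norm v)\<^sup>2" using z by (simp add: power2_eq_square)
    finally have "\<phi>' z \<le> 0" unfolding \<phi>'_def by (simp add: inner_diff_right inner_commute algebra_simps)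
    thus ?thesis using z by simp
  qed
  thus ?thesis unfolding \<phi>_def v_def by (simp add: algebra_simps)
qed

lemma per_i_ineq:
  fixes xk x' :: "'a::real_inner"
  assumes gi: "gi \<in> csubdiff C (chi i) x'" and xkC: "xk \<in> C"
  shows "psik f grad L chi xk i x' + inner ((grad i xk + L i *\<^sub>R (x' - xk)) + gi) (xk - x')
          + L i / 2 * (norm (x' - xk))\<^sup>2 \<le> psik f grad L chi xk i xk"
proof -
  have c: "chi i x' + inner gi (xk - x') \<le> chi i xk" using gi xkC unfolding csubdiff_def by auto
  have n: "inner (x' - xk) (xk - x') = - (norm (x' - xk))\<^sup>2"
  proof -
    have "xk - x' = - (x' - xk)" by simp
    hence "inner (x' - xk) (xk - x') = - inner (x' - xk) (x' - xk)" by (metis inner_minus_right)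
    thus ?thesis by (simp add: power2_norm_eq_inner)
  qed
  have m: "inner (grad i xk) (xk - x') = - inner (grad i xk) (x' - xk)"
    by (metis inner_minus_right minus_diff_eq)
  have "inner ((grad i xk + L i *\<^sub>R (x' - xk)) + gi) (xk - x')
        = - inner (grad i xk) (x' - xk) - L i * (norm (x' - xk))\<^sup>2 + inner gi (xk - x')"
    unfolding inner_add_left inner_scaleR_left n m by simp
  thus ?thesis using c unfolding psik_def by simp
qed

lemma sc_step:
  fixes xk x' :: "'a::real_inner"
  assumes gsub: "\<forall>i\<in>{0..m}. g i \<in> csubdiff C (chi i) x'"
    and xkC: "xk \<in> C"
    and stat: "0 = (grad 0 xk + L 0 *\<^sub>R (x' - xk)) + g 0
                + (\<Sum>i=1..m. lam i *\<^sub>R ((grad i xk + L i *\<^sub>R (x' - xk)) + g i))"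
    and lnn: "\<forall>i\<in>{1..m}. 0 \<le> lam i"
    and compl: "\<forall>i\<in>{1..m}. lam i * (psik f grad L chi xk i x' - e i) = 0"
    and sub: "\<forall>i\<in>{1..m}. psik f grad L chi xk i xk \<le> e i"
    and Lnn: "\<forall>i\<in>{1..m}. 0 \<le> L i * (norm (x' - xk))\<^sup>2"
  shows "psik f grad L chi xk 0 x' + L 0 / 2 * (norm (x' - xk))\<^sup>2 \<le> psik f grad L chi xk 0 xk"
proof -
  define G where "G i = (grad i xk + L i *\<^sub>R (x' - xk)) + g i" for i
  have each: "lam i * inner (G i) (xk - x') \<le> 0" if i: "i \<in> {1..m}" for i
  proof -
    have "psik f grad L chi xk i x' + inner (G i) (xk - x') + L i / 2 * (norm (x' - xk))\<^sup>2
          \<le> psik f grad L chi xk i xk"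
      unfolding G_def by (rule per_i_ineq) (use gsub i xkC in auto)
    hence "inner (G i) (xk - x') + L i / 2 * (norm (x' - xk))\<^sup>2
          \<le> psik f grad L chi xk i xk - psik f grad L chi xk i x'" by simp
    hence "lam i * (inner (G i) (xk - x') + L i / 2 * (norm (x' - xk))\<^sup>2)
          \<le> lam i * (psik f grad L chi xk i xk - psik f grad L chi xk i x')"
      using lnn i by (intro mult_left_mono) auto
    also have "\<dots> = lam i * (psik f grad L chi xk i xk - e i)"
    proof -
      have "lam i * psik f grad L chi xk i x' = lam i * e i"
        using compl i by (simp add: right_diff_distrib)
      thus ?thesis by (simp add: right_diff_distrib)
    qed
    also have "\<dots> \<le> 0" using lnn sub i by (simp add: mult_nonneg_nonpos)
    finally have "lam i * inner (G i) (xk - x') + lam i * (L i / 2 * (norm (x' - xk))\<^sup>2) \<le> 0"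
      by (simp add: algebra_simps)
    moreover have "0 \<le> lam i * (L i * (norm (x' - xk))\<^sup>2 / 2)"
      using lnn Lnn i by (intro mult_nonneg_nonneg) auto
    hence "0 \<le> lam i * (L i / 2 * (norm (x' - xk))\<^sup>2)" by simp
    ultimately show ?thesis by linarith
  qed
  have "inner (G 0) (xk - x') + (\<Sum>i=1..m. lam i * inner (G i) (xk - x')) = 0"
  proof -
    have "inner (G 0 + (\<Sum>i=1..m. lam i *\<^sub>R G i)) (xk - x') = 0"
      using stat unfolding G_def by (metis inner_zero_left add.assoc)
    thus ?thesis by (simp add: inner_add_left inner_sum_left)
  qed
  moreover have "(\<Sum>i=1..m. lam i * inner (G i) (xk - x')) \<le> 0"
    using each by (intro sum_nonpos) auto
  ultimately have g0: "0 \<le> inner (G 0) (xk - x')" by linarith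
  have "psik f grad L chi xk 0 x' + inner (G 0) (xk - x') + L 0 / 2 * (norm (x' - xk))\<^sup>2
          \<le> psik f grad L chi xk 0 xk"
    unfolding G_def by (rule per_i_ineq) (use gsub xkC in auto)
  thus ?thesis using g0 by linarith
qed

lemma vnorm_L2: "vnorm m v = L2_set v {1..m}"
  unfolding vnorm_def L2_set_def by simp

lemma vnorm_nonneg: "0 \<le> vnorm m v"
  unfolding vnorm_def by (simp add: sum_nonneg)

lemma cs_vnorm: "(\<Sum>i=1..m. a i * b i) \<le> vnorm m a * vnorm m b"
proof -
  have "(\<Sum>i=1..m. a i * b i) \<le> (\<Sum>i=1..m. \<bar>a i\<bar> * \<bar>b i\<bar>)"
    by (intro sum_mono) (metis abs_ge_self abs_mult)
  also have "\<dots> \<le> vnorm m a * vnorm m b" unfolding vnorm_L2 by (rule L2_set_mult_ineq)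
  finally show ?thesis .
qed

lemma stat_bound:
  fixes xk x' :: "'a::real_inner"
  assumes gsub: "\<forall>i\<in>{0..m}. g i \<in> csubdiff C (chi i) x'"
    and stat: "0 = (grad 0 xk + L 0 *\<^sub>R (x' - xk)) + g 0
                + (\<Sum>i=1..m. lam i *\<^sub>R ((grad i xk + L i *\<^sub>R (x' - xk)) + g i))"
    and lip: "\<forall>i\<in>{0..m}. norm (grad i x' - grad i xk) \<le> L i * norm (x' - xk)"
    and lnn: "\<forall>i\<in>{1..m}. 0 \<le> lam i"
    and lb: "vnorm m lam \<le> B"
  shows "(setnorm (lagr_subdiff C m grad chi lam x'))\<^sup>2 \<le> (2 * (L 0 + B * vnorm m L) * norm (x' - xk))\<^sup>2"
proof -
  define w where "w = x' - xk"
  define e where "e = grad 0 x' + g 0 + (\<Sum>i=1..m. lam i *\<^sub>R (grad i x' + g i))"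
  define u where "u i = (grad i x' - grad i xk) - L i *\<^sub>R w" for i
  have eS: "e \<in> lagr_subdiff C m grad chi lam x'"
    unfolding lagr_subdiff_def e_def using gsub by blast
  have "e = e - ((grad 0 xk + L 0 *\<^sub>R w) + g 0
                + (\<Sum>i=1..m. lam i *\<^sub>R ((grad i xk + L i *\<^sub>R w) + g i)))"
    using stat unfolding w_def by simp
  also have "\<dots> = u 0 + ((\<Sum>i=1..m. lam i *\<^sub>R (grad i x' + g i))
                - (\<Sum>i=1..m. lam i *\<^sub>R ((grad i xk + L i *\<^sub>R w) + g i)))"
    unfolding e_def u_def by (simp add: algebra_simps)
  also have "\<dots> = u 0 + (\<Sum>i=1..m. lam i *\<^sub>R u i)"
    unfolding sum_subtractf[symmetric] u_def by (simp add: algebra_simps)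
  finally have eu: "e = u 0 + (\<Sum>i=1..m. lam i *\<^sub>R u i)" .
  have ub: "norm (u i) \<le> 2 * L i * norm w" if "i \<in> {0..m}" for i
  proof -
    have l: "norm (grad i x' - grad i xk) \<le> L i * norm w" using lip that unfolding w_def by auto
    have "0 \<le> L i * norm w" using l norm_ge_zero order_trans by blast
    hence s: "norm (L i *\<^sub>R w) = L i * norm w"
      by (metis abs_of_nonneg abs_mult abs_norm_cancel norm_scaleR)
    have "norm (u i) \<le> norm (grad i x' - grad i xk) + norm (L i *\<^sub>R w)"
      unfolding u_def by (rule norm_triangle_ineq4)
    thus ?thesis using l s by linarith
  qed
  have "norm e \<le> norm (u 0) + norm (\<Sum>i=1..m. lam i *\<^sub>R u i)"
    unfolding eu by (rule norm_triangle_ineq)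
  also have "norm (\<Sum>i=1..m. lam i *\<^sub>R u i) \<le> (\<Sum>i=1..m. lam i * (2 * L i * norm w))"
  proof -
    have "norm (\<Sum>i=1..m. lam i *\<^sub>R u i) \<le> (\<Sum>i=1..m. norm (lam i *\<^sub>R u i))"
      by (rule norm_sum)
    also have "\<dots> \<le> (\<Sum>i=1..m. lam i * (2 * L i * norm w))"
    proof (intro sum_mono)
      fix i assume i: "i \<in> {1..m}"
      have "norm (lam i *\<^sub>R u i) = lam i * norm (u i)" using lnn i by simp
      also have "\<dots> \<le> lam i * (2 * L i * norm w)" using ub[of i] lnn i by (intro mult_left_mono) auto
      finally show "norm (lam i *\<^sub>R u i) \<le> lam i * (2 * L i * norm w)" .
    qed
    finally show ?thesis .
  qed
  also have "(\<Sum>i=1..m. lam i * (2 * L i * norm w)) = 2 * norm w * (\<Sum>i=1..m. lam i * L i)"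
    by (simp add: sum_distrib_left algebra_simps)
  also have "\<dots> \<le> 2 * norm w * (B * vnorm m L)"
  proof (intro mult_left_mono)
    have "(\<Sum>i=1..m. lam i * L i) \<le> vnorm m lam * vnorm m L" by (rule cs_vnorm)
    also have "\<dots> \<le> B * vnorm m L" using lb vnorm_nonneg by (intro mult_right_mono) auto
    finally show "(\<Sum>i=1..m. lam i * L i) \<le> B * vnorm m L" .
  qed simp
  finally have en: "norm e \<le> norm (u 0) + 2 * norm w * (B * vnorm m L)" by simp
  have "norm e \<le> 2 * (L 0 + B * vnorm m L) * norm (x' - xk)"
    using en ub[of 0] unfolding w_def by (simp add: algebra_simps)
  moreover have "setnorm (lagr_subdiff C m grad chi lam x') \<le> norm e"
    unfolding setnorm_def by (rule cInf_lower) (use eS in \<open>auto intro: bdd_belowI[of _ 0]\<close>)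
  moreover have "0 \<le> setnorm (lagr_subdiff C m grad chi lam x')"
    unfolding setnorm_def using eS by (intro cInf_greatest) auto
  ultimately show ?thesis by (intro power_mono) auto
qed

lemma compl_bound:
  fixes P Q e eta lam L :: "nat \<Rightarrow> real"
  assumes lnn: "\<forall>i\<in>{1..m}. 0 \<le> lam i"
    and compl: "\<forall>i\<in>{1..m}. lam i * (Q i - e i) = 0"
    and lo: "\<forall>i\<in>{1..m}. Q i - P i \<le> L i * N"
    and fe: "\<forall>i\<in>{1..m}. P i \<le> e i \<and> e i < eta i"
    and lb: "vnorm m lam \<le> B" and N: "0 \<le> N"
  shows "(\<Sum>i=1..m. lam i * \<bar>P i - eta i\<bar>) \<le> B * vnorm m (\<lambda>i. eta i - e i) + B * vnorm m L * N"
proof -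
  have "(\<Sum>i=1..m. lam i * \<bar>P i - eta i\<bar>) \<le> (\<Sum>i=1..m. lam i * (eta i - e i) + N * (lam i * L i))"
  proof (intro sum_mono)
    fix i assume i: "i \<in> {1..m}"
    have a: "\<bar>P i - eta i\<bar> = (eta i - e i) + (Q i - P i) + (e i - Q i)"
    proof -
      have "P i \<le> eta i" using fe i by force
      thus ?thesis by simp
    qed
    have b: "lam i * (e i - Q i) = 0"
    proof -
      have "lam i * (Q i - e i) = 0" using compl i by blast
      thus ?thesis by auto
    qed
    have c: "lam i * (Q i - P i) \<le> lam i * (L i * N)" using lo lnn i by (intro mult_left_mono) auto
    show "lam i * \<bar>P i - eta i\<bar> \<le> lam i * (eta i - e i) + N * (lam i * L i)"
    proof -
      have "lam i * \<bar>P i - eta i\<bar> = lam i * (eta i - e i) + lam i * (Q i - P i) + lam i * (e i - Q i)"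
        unfolding a by (simp only: distrib_left)
      moreover have "lam i * (L i * N) = N * (lam i * L i)" by simp
      ultimately show ?thesis using b c by linarith
    qed
  qed
  also have "\<dots> = (\<Sum>i=1..m. lam i * (eta i - e i)) + N * (\<Sum>i=1..m. lam i * L i)"
    by (simp add: sum.distrib sum_distrib_left)
  also have "\<dots> \<le> B * vnorm m (\<lambda>i. eta i - e i) + N * (B * vnorm m L)"
  proof (intro add_mono mult_left_mono N)
    have "(\<Sum>i=1..m. lam i * (eta i - e i)) \<le> vnorm m lam * vnorm m (\<lambda>i. eta i - e i)"
      using cs_vnorm[where a=lam and b="\<lambda>i. eta i - e i" and m=m] by simp
    also have "\<dots> \<le> B * vnorm m (\<lambda>i. eta i - e i)" using lb vnorm_nonneg by (intro mult_right_mono) auto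
    finally show "(\<Sum>i=1..m. lam i * (eta i - e i)) \<le> B * vnorm m (\<lambda>i. eta i - e i)" .
    have "(\<Sum>i=1..m. lam i * L i) \<le> vnorm m lam * vnorm m L" by (rule cs_vnorm)
    also have "\<dots> \<le> B * vnorm m L" using lb vnorm_nonneg by (intro mult_right_mono) auto
    finally show "(\<Sum>i=1..m. lam i * L i) \<le> B * vnorm m L" .
  qed
  finally show ?thesis by (simp add: algebra_simps)
qed

theorem mainTheorem7:
  fixes C :: "'a::euclidean_space set"
    and m :: nat
    and f chi :: "nat \<Rightarrow> 'a \<Rightarrow> real"
    and grad :: "nat \<Rightarrow> 'a \<Rightarrow> 'a"
    and L :: "nat \<Rightarrow> real"
    and eta :: "nat \<Rightarrow> real"
    and x :: "nat \<Rightarrow> 'a"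
    and etak :: "nat \<Rightarrow> nat \<Rightarrow> real"
    and lam :: "nat \<Rightarrow> nat \<Rightarrow> real"
    and B :: real
    and alpha :: "nat \<Rightarrow> real"
    and K :: nat
  assumes dom_ne: "C \<noteq> {}"
    and chi0_convex: "convex C" "convex_on C (chi 0)"
    and chi0_lsc: "closed {(y, t). y \<in> C \<and> chi 0 y \<le> t}"
    and chi_convex: "\<forall>i\<in>{1..m}. convex_on C (chi i)"
    and chi_cont: "\<forall>i\<in>{1..m}. continuous_on C (chi i)"
    and f_grad: "\<forall>i\<in>{0..m}. \<forall>y\<in>C. GDERIV (f i) y :> grad i y"
    and grad_lip: "\<forall>i\<in>{0..m}. \<forall>y\<in>C. \<forall>z\<in>C. norm (grad i y - grad i z) \<le> L i * norm (y - z)"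
    and L0_pos: "L 0 > 0"
    and opt_finite: "bdd_below (psi f chi 0 ` feas C m f chi eta)"
    and feas_ne: "feas C m f chi eta \<noteq> {}"
    and feas_compact: "compact (feas C m f chi eta)"
    and x0: "x 0 \<in> C"
    and eta0: "\<forall>i\<in>{1..m}. psi f chi i (x 0) < etak 0 i \<and> etak 0 i < eta i"
    and eta_step: "\<forall>k. \<forall>i\<in>{1..m}. etak k i < etak (Suc k) i \<and> etak (Suc k) i < eta i"
    and eta_lim: "\<forall>i\<in>{1..m}. (\<lambda>k. etak k i) \<longlonglongrightarrow> eta i"
    and x_feas: "\<forall>k. x (Suc k) \<in> C \<and>
                   (\<forall>i\<in>{1..m}. psik f grad L chi (x k) i (x (Suc k)) \<le> etak k i)"
    and x_min: "\<forall>k. \<forall>y\<in>C. (\<forall>i\<in>{1..m}. psik f grad L chi (x k) i y \<le> etak k i) \<longrightarrow>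
                   psik f grad L chi (x k) 0 (x (Suc k)) \<le> psik f grad L chi (x k) 0 y"
    and lam_nonneg: "\<forall>k. \<forall>i\<in>{1..m}. 0 \<le> lam (Suc k) i"
    and lam_stat: "\<forall>k. 0 \<in> lagr_subdiff C m (\<lambda>i y. grad i (x k) + L i *\<^sub>R (y - x k)) chi
                          (lam (Suc k)) (x (Suc k))"
    and lam_compl: "\<forall>k. \<forall>i\<in>{1..m}.
                      lam (Suc k) i * (psik f grad L chi (x k) i (x (Suc k)) - etak k i) = 0"
    and mfcq: "\<forall>y\<in>feas C m f chi eta. MFCQ C m f grad chi eta y"
    and B_pos: "B > 0"
    and lam_bound: "\<forall>k. vnorm m (lam (Suc k)) \<le> B"
    and alpha_pos: "\<forall>k\<le>K. 0 < alpha k"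
    and alpha_mono: "\<forall>j k. j \<le> k \<longrightarrow> k \<le> K \<longrightarrow> alpha j \<le> alpha k"
  shows "let D = sqrt ((psi f chi 0 (x 0) - Inf (psi f chi 0 ` feas C m f chi eta)) / L 0);
             S1 = 8 * (L 0 + B * vnorm m L)^2 * D^2 * alpha K;
             S2 = 2 * B * vnorm m L * D^2 * alpha K
                  + B * (\<Sum>k\<le>K. alpha k * vnorm m (\<lambda>i. eta i - etak k i));
             A = (\<Sum>j\<le>K. alpha j);
             khat = embed_pmf (\<lambda>k. if k \<le> K then alpha k / A else 0)
         in (\<Sum>k\<le>K. alpha k * (setnorm (lagr_subdiff C m grad chi (lam (Suc k)) (x (Suc k))))^2) \<le> S1
          \<and> (\<Sum>k\<le>K. alpha k * (\<Sum>i=1..m. lam (Suc k) i * \<bar>psi f chi i (x (Suc k)) - eta i\<bar>)) \<le> S2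
          \<and> rand_typeI_KKT C m f grad chi eta
              (map_pmf (\<lambda>k. (x (Suc k), lam (Suc k))) khat) (max S1 S2 / A)"
proof -
  define N where "N k = (norm (x (Suc k) - x k))\<^sup>2" for k
  define c where "c = L 0 + B * vnorm m L"
  have xC: "x k \<in> C" for k using x0 x_feas by (cases k) auto
  have up: "psi f chi i (x (Suc k)) \<le> psik f grad L chi (x k) i (x (Suc k))" if i: "i \<in> {0..m}" for i k
  proof -
    have "1 * (f i (x (Suc k)) - f i (x k) - inner (grad i (x k)) (x (Suc k) - x k))
          \<le> L i / 2 * (norm (x (Suc k) - x k))\<^sup>2"
      by (rule descent_aux[where C=C]) (use chi0_convex xC f_grad grad_lip i in auto)
    thus ?thesis unfolding psi_def psik_def by simp
  qed
  have lo: "psik f grad L chi (x k) i (x (Suc k)) - psi f chi i (x (Suc k)) \<le> L i * N k"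
    if i: "i \<in> {0..m}" for i k
  proof -
    have "(-1) * (f i (x (Suc k)) - f i (x k) - inner (grad i (x k)) (x (Suc k) - x k))
          \<le> L i / 2 * (norm (x (Suc k) - x k))\<^sup>2"
      by (rule descent_aux[where C=C]) (use chi0_convex xC f_grad grad_lip i in auto)
    thus ?thesis unfolding psi_def psik_def N_def by simp
  qed
  have self: "psik f grad L chi xk i xk = psi f chi i xk" for xk i
    unfolding psik_def psi_def by simp
  have fe: "\<forall>i\<in>{1..m}. psi f chi i (x (Suc k)) \<le> etak k i \<and> etak k i < eta i" for k
  proof
    fix i assume i: "i \<in> {1..m}"
    have "psi f chi i (x (Suc k)) \<le> psik f grad L chi (x k) i (x (Suc k))" using up[of i k] i by auto
    also have "\<dots> \<le> etak k i" using x_feas i by auto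
    finally show "psi f chi i (x (Suc k)) \<le> etak k i \<and> etak k i < eta i"
      using i eta0 eta_step by (cases k) auto
  qed
  have sub: "\<forall>i\<in>{1..m}. psik f grad L chi (x k) i (x k) \<le> etak k i" for k
  proof (cases k)
    case 0 thus ?thesis using eta0 self by (simp add: less_imp_le)
  next
    case (Suc j)
    show ?thesis
    proof
      fix i assume i: "i \<in> {1..m}"
      have "psi f chi i (x (Suc j)) \<le> etak j i" using fe[of j] i by auto
      also have "\<dots> < etak (Suc j) i" using eta_step i by auto
      finally show "psik f grad L chi (x k) i (x k) \<le> etak k i" using Suc self by simp
    qed
  qed
  have feasx: "x (Suc k) \<in> feas C m f chi eta" for k
    unfolding feas_def using xC fe[of k] by force
  have Lnn: "0 \<le> L i * N k" if i: "i \<in> {0..m}" for i k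
  proof -
    have "0 \<le> L i * norm (x (Suc k) - x k)"
      using grad_lip i xC norm_ge_zero order_trans by meson
    hence "0 \<le> (L i * norm (x (Suc k) - x k)) * norm (x (Suc k) - x k)" by simp
    thus ?thesis unfolding N_def by (simp add: power2_eq_square mult.assoc)
  qed
  have gex: "\<exists>g. (\<forall>i\<in>{0..m}. g i \<in> csubdiff C (chi i) (x (Suc k))) \<and>
     0 = (grad 0 (x k) + L 0 *\<^sub>R (x (Suc k) - x k)) + g 0
                + (\<Sum>i=1..m. lam (Suc k) i *\<^sub>R ((grad i (x k) + L i *\<^sub>R (x (Suc k) - x k)) + g i))" for k
    using lam_stat unfolding lagr_subdiff_def by blast
  have desc: "psi f chi 0 (x (Suc k)) + L 0 / 2 * N k \<le> psi f chi 0 (x k)" for k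
  proof -
    obtain g where g: "\<forall>i\<in>{0..m}. g i \<in> csubdiff C (chi i) (x (Suc k))"
      "0 = (grad 0 (x k) + L 0 *\<^sub>R (x (Suc k) - x k)) + g 0
                + (\<Sum>i=1..m. lam (Suc k) i *\<^sub>R ((grad i (x k) + L i *\<^sub>R (x (Suc k) - x k)) + g i))"
      using gex[of k] by blast
    have "psik f grad L chi (x k) 0 (x (Suc k)) + L 0 / 2 * (norm (x (Suc k) - x k))\<^sup>2
          \<le> psik f grad L chi (x k) 0 (x k)"
      by (rule sc_step[where e="etak k"])
        (use g xC lam_nonneg lam_compl sub Lnn in \<open>auto simp: N_def\<close>)
    thus ?thesis using up[of 0 k] self unfolding N_def by simp
  qed
  have bnd1: "(setnorm (lagr_subdiff C m grad chi (lam (Suc k)) (x (Suc k))))\<^sup>2 \<le> 4 * c\<^sup>2 * N k" for k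
  proof -
    obtain g where g: "\<forall>i\<in>{0..m}. g i \<in> csubdiff C (chi i) (x (Suc k))"
      "0 = (grad 0 (x k) + L 0 *\<^sub>R (x (Suc k) - x k)) + g 0
                + (\<Sum>i=1..m. lam (Suc k) i *\<^sub>R ((grad i (x k) + L i *\<^sub>R (x (Suc k) - x k)) + g i))"
      using gex[of k] by blast
    have "(setnorm (lagr_subdiff C m grad chi (lam (Suc k)) (x (Suc k))))\<^sup>2
          \<le> (2 * (L 0 + B * vnorm m L) * norm (x (Suc k) - x k))\<^sup>2"
      by (rule stat_bound[where g=g and C=C])
        (use g xC grad_lip lam_nonneg lam_bound in auto)
    moreover have "(2 * c * norm (x (Suc k) - x k))\<^sup>2 = 4 * c\<^sup>2 * N k"
      unfolding N_def by (simp add: power_mult_distrib)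
    ultimately show ?thesis unfolding c_def by simp
  qed
  have bnd2: "(\<Sum>i=1..m. lam (Suc k) i * \<bar>psi f chi i (x (Suc k)) - eta i\<bar>)
     \<le> B * vnorm m (\<lambda>i. eta i - etak k i) + B * vnorm m L * N k" for k
    by (rule compl_bound[where Q="\<lambda>i. psik f grad L chi (x k) i (x (Suc k))"])
      (use lam_nonneg lam_compl lo fe lam_bound in \<open>auto simp: N_def\<close>)
  have tele: "(\<Sum>k\<le>n. L 0 / 2 * N k) \<le> psi f chi 0 (x 0) - psi f chi 0 (x (Suc n))" for n
  proof (induction n)
    case 0 thus ?case using desc[of 0] by simp
  next
    case (Suc n) thus ?case using desc[of "Suc n"] by simp
  qed
  define I where "I = Inf (psi f chi 0 ` feas C m f chi eta)"
  have infle: "I \<le> psi f chi 0 (x (Suc K))"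
    unfolding I_def by (rule cInf_lower) (use feasx opt_finite in auto)
  have Nnn: "0 \<le> N k" for k unfolding N_def by simp
  have sN: "0 \<le> (\<Sum>k\<le>K. N k)" using Nnn by (simp add: sum_nonneg)
  have "L 0 / 2 * (\<Sum>k\<le>K. N k) \<le> psi f chi 0 (x 0) - I"
    using tele[of K] infle by (simp add: sum_distrib_left)
  hence SN0: "(\<Sum>k\<le>K. N k) \<le> 2 * ((psi f chi 0 (x 0) - I) / L 0)"
    using L0_pos by (simp add: field_simps)
  have Inn: "0 \<le> (psi f chi 0 (x 0) - I) / L 0"
    using SN0 sN by linarith
  define D where "D = sqrt ((psi f chi 0 (x 0) - I) / L 0)"
  have D2: "D\<^sup>2 = (psi f chi 0 (x 0) - I) / L 0" unfolding D_def using Inn by simp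
  have aK: "0 < alpha K" using alpha_pos by auto
  have aN: "(\<Sum>k\<le>K. alpha k * N k) \<le> alpha K * (2 * D\<^sup>2)"
  proof -
    have "(\<Sum>k\<le>K. alpha k * N k) \<le> (\<Sum>k\<le>K. alpha K * N k)"
      using alpha_mono Nnn by (intro sum_mono mult_right_mono) auto
    also have "\<dots> = alpha K * (\<Sum>k\<le>K. N k)" by (simp add: sum_distrib_left)
    also have "\<dots> \<le> alpha K * (2 * D\<^sup>2)" using SN0 D2 aK by (intro mult_left_mono) auto
    finally show ?thesis .
  qed
  define S1 where "S1 = 8 * (L 0 + B * vnorm m L)^2 * D^2 * alpha K"
  define S2 where "S2 = 2 * B * vnorm m L * D^2 * alpha K
                  + B * (\<Sum>k\<le>K. alpha k * vnorm m (\<lambda>i. eta i - etak k i))"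
  have C1: "(\<Sum>k\<le>K. alpha k * (setnorm (lagr_subdiff C m grad chi (lam (Suc k)) (x (Suc k))))^2) \<le> S1"
  proof -
    have "(\<Sum>k\<le>K. alpha k * (setnorm (lagr_subdiff C m grad chi (lam (Suc k)) (x (Suc k))))^2)
          \<le> (\<Sum>k\<le>K. alpha k * (4 * c\<^sup>2 * N k))"
      using alpha_pos bnd1 by (intro sum_mono mult_left_mono) (auto simp: less_imp_le)
    also have "\<dots> = 4 * c\<^sup>2 * (\<Sum>k\<le>K. alpha k * N k)"
      by (simp add: sum_distrib_left algebra_simps)
    also have "\<dots> \<le> 4 * c\<^sup>2 * (alpha K * (2 * D\<^sup>2))" using aN by (intro mult_left_mono) auto
    also have "\<dots> = S1" unfolding S1_def c_def by simp
    finally show ?thesis .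
  qed
  have C2: "(\<Sum>k\<le>K. alpha k * (\<Sum>i=1..m. lam (Suc k) i * \<bar>psi f chi i (x (Suc k)) - eta i\<bar>)) \<le> S2"
  proof -
    have "(\<Sum>k\<le>K. alpha k * (\<Sum>i=1..m. lam (Suc k) i * \<bar>psi f chi i (x (Suc k)) - eta i\<bar>))
          \<le> (\<Sum>k\<le>K. alpha k * (B * vnorm m (\<lambda>i. eta i - etak k i) + B * vnorm m L * N k))"
      using alpha_pos bnd2 by (intro sum_mono mult_left_mono) (auto simp: less_imp_le)
    also have "\<dots> = B * (\<Sum>k\<le>K. alpha k * vnorm m (\<lambda>i. eta i - etak k i))
                    + B * vnorm m L * (\<Sum>k\<le>K. alpha k * N k)"
      by (simp add: sum_distrib_left sum.distrib algebra_simps)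
    also have "\<dots> \<le> B * (\<Sum>k\<le>K. alpha k * vnorm m (\<lambda>i. eta i - etak k i))
                    + B * vnorm m L * (alpha K * (2 * D\<^sup>2))"
      using aN B_pos vnorm_nonneg by (intro add_left_mono mult_left_mono) auto
    also have "\<dots> = S2" unfolding S2_def by simp
    finally show ?thesis .
  qed
  define A where "A = (\<Sum>j\<le>K. alpha j)"
  define khat where "khat = embed_pmf (\<lambda>k. if k \<le> K then alpha k / A else 0)"
  have C3: "rand_typeI_KKT C m f grad chi eta
              (map_pmf (\<lambda>k. (x (Suc k), lam (Suc k))) khat) (max S1 S2 / A)"
  proof -
    define p where "p k = (if k \<le> K then alpha k / A else 0)" for k
    have Apos: "0 < A" unfolding A_def using alpha_pos by (intro sum_pos) auto
    have pnn: "0 \<le> p k" for k unfolding p_def using alpha_pos Apos by (auto simp: less_imp_le)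
    have psum1: "(\<Sum>k\<le>K. p k) = 1"
    proof -
      have "(\<Sum>k\<le>K. p k) = (\<Sum>k\<le>K. alpha k / A)" unfolding p_def by simp
      also have "\<dots> = (\<Sum>k\<le>K. alpha k) / A" by (simp add: sum_divide_distrib)
      also have "\<dots> = A / A" unfolding A_def ..
      finally show ?thesis using Apos by simp
    qed
    have psum: "(\<integral>\<^sup>+k. ennreal (p k) \<partial>count_space UNIV) = 1"
    proof -
      have "(\<integral>\<^sup>+k. ennreal (p k) \<partial>count_space UNIV) = (\<Sum>k\<le>K. ennreal (p k))"
        by (rule nn_integral_count_space') (auto simp: p_def)
      also have "\<dots> = ennreal (\<Sum>k\<le>K. p k)" using pnn by simp
      finally show ?thesis using psum1 by simp
    qed
    have kh: "khat = embed_pmf p" unfolding khat_def p_def ..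
    have pm: "pmf khat k = p k" for k unfolding kh using pmf_embed_pmf[OF pnn psum] by blast
    have sp: "set_pmf khat \<subseteq> {..K}"
    proof
      fix k assume "k \<in> set_pmf khat"
      hence "p k \<noteq> 0" unfolding kh set_embed_pmf[OF pnn psum] by simp
      thus "k \<in> {..K}" unfolding p_def by (cases "k \<le> K") auto
    qed
    have ex: "measure_pmf.expectation (map_pmf (\<lambda>k. (x (Suc k), lam (Suc k))) khat) F
              = (\<Sum>k\<le>K. alpha k * F (x (Suc k), lam (Suc k))) / A" for F :: "'a \<times> (nat \<Rightarrow> real) \<Rightarrow> real"
    proof -
      have "measure_pmf.expectation (map_pmf (\<lambda>k. (x (Suc k), lam (Suc k))) khat) F
           = measure_pmf.expectation khat (\<lambda>k. F (x (Suc k), lam (Suc k)))" by simp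
      also have "\<dots> = (\<Sum>k\<le>K. F (x (Suc k), lam (Suc k)) * pmf khat k)"
        by (rule integral_measure_pmf_real) (use sp in auto)
      also have "\<dots> = (\<Sum>k\<le>K. alpha k * F (x (Suc k), lam (Suc k)) / A)"
        unfolding pm p_def by (intro sum.cong) auto
      also have "\<dots> = (\<Sum>k\<le>K. alpha k * F (x (Suc k), lam (Suc k))) / A"
        by (simp add: sum_divide_distrib)
      finally show ?thesis .
    qed
    have part1: "\<forall>(y, l)\<in>set_pmf (map_pmf (\<lambda>k. (x (Suc k), lam (Suc k))) khat).
                   y \<in> feas C m f chi eta \<and> (\<forall>i\<in>{1..m}. 0 \<le> l i)"
      unfolding set_map_pmf using feasx lam_nonneg by blast
    have part2: "measure_pmf.expectation (map_pmf (\<lambda>k. (x (Suc k), lam (Suc k))) khat)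
          (\<lambda>(y, l). (setnorm (lagr_subdiff C m grad chi l y))^2) \<le> max S1 S2 / A"
      unfolding ex using C1 Apos by (simp add: divide_right_mono)
    have part3: "measure_pmf.expectation (map_pmf (\<lambda>k. (x (Suc k), lam (Suc k))) khat)
          (\<lambda>(y, l). - (\<Sum>i=1..m. l i * (psi f chi i y - eta i))) \<le> max S1 S2 / A"
    proof -
      have eq: "- (\<Sum>i=1..m. lam (Suc k) i * (psi f chi i (x (Suc k)) - eta i))
            = (\<Sum>i=1..m. lam (Suc k) i * \<bar>psi f chi i (x (Suc k)) - eta i\<bar>)" for k
      proof -
        have "- (\<Sum>i=1..m. lam (Suc k) i * (psi f chi i (x (Suc k)) - eta i))
            = (\<Sum>i=1..m. - (lam (Suc k) i * (psi f chi i (x (Suc k)) - eta i)))"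
          by (simp add: sum_negf)
        also have "\<dots> = (\<Sum>i=1..m. lam (Suc k) i * \<bar>psi f chi i (x (Suc k)) - eta i\<bar>)"
        proof (intro sum.cong refl)
          fix i assume i: "i \<in> {1..m}"
          have "psi f chi i (x (Suc k)) \<le> eta i" using fe[of k] i by force
          thus "- (lam (Suc k) i * (psi f chi i (x (Suc k)) - eta i))
              = lam (Suc k) i * \<bar>psi f chi i (x (Suc k)) - eta i\<bar>" by (simp add: right_diff_distrib)
        qed
        finally show ?thesis .
      qed
      show ?thesis unfolding ex using C2 Apos eq by (simp add: divide_right_mono)
    qed
    show ?thesis unfolding rand_typeI_KKT_def using part1 part2 part3 by blast
  qed
  show ?thesis unfolding Let_def using C1 C2 C3
    unfolding S1_def S2_def D_def I_def A_def khat_def by blast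
qed
end
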